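(* Let $D,\chi,\varepsilon,a>0$ and $\beta>0$, set $b=D\beta^2$, and assume $\omega^2:=\frac{a\chi}{D\varepsilon}-\beta^2>0$. Then there exist $\rho_0>0$, $\phi_0>0$, $r_0>0$ and functions $\rho\in C^0[0,\infty)$, $\phi\in C^2[0,\infty)$ with $\rho\ge 0$, $\phi\ge 0$, $\phi$ bounded, such that the function $p(\rho)=\frac{\varepsilon}{2}\rho^2$ is differentiable on $(0,\infty)$ and $$\partial_r\big(p(\rho)\big)=\chi\rho\,\phi_r,\qquad D\phi_{rr}+D\frac{\phi_r}{r}+a\rho-b\phi=0\quad\text{on }(0,\infty),$$ and moreover $\rho(0)=\rho_0$, $\phi(0)=\phi_0$, $\rho>0$ on $[0,r_0)$ and $\rho\equiv 0$ on $[r_0,\infty)$ (a "half bump" solution).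
   Context: This system is the radially symmetric stationary form (with zero velocity) of the hyperbolic-parabolic chemotaxis model $\rho_t+\mathrm{div}(\rho u)=0$, $(\rho u)_t+\mathrm{div}(\rho u\otimes u)+\nabla p(\rho)=\chi\rho\nabla\phi-\alpha\rho u$, $\delta\phi_t=D\Delta\phi+a\rho-b\phi$ on $\mathbb{R}^2$ with pressure $p(\rho)=\frac{\varepsilon}{2}\rho^2$; here $r=|x|$, $\rho(r)$ is cell density and $\phi(r)$ chemoattractant concentration. *)

theory Defs
  imports "HOL-Analysis.Analysis"
begin

end

theory Submission
  imports Defs
begin



definition bc :: "real \<Rightarrow> nat \<Rightarrow> real" where "bc c k = c^k / (fact k)^2"
definition GG :: "real \<Rightarrow> real \<Rightarrow> real" where "GG c u = (\<Sum>k. bc c k * u^k)"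
definition G1 :: "real \<Rightarrow> real \<Rightarrow> real" where "G1 c u = (\<Sum>k. diffs (bc c) k * u^k)"
definition G2 :: "real \<Rightarrow> real \<Rightarrow> real" where "G2 c u = (\<Sum>k. diffs (diffs (bc c)) k * u^k)"
definition G3 :: "real \<Rightarrow> real \<Rightarrow> real" where "G3 c u = (\<Sum>k. diffs (diffs (diffs (bc c))) k * u^k)"

lemma bc_summable: "summable (\<lambda>k. bc c k * u^k)"
proof (rule summable_comparison_test)
  show "summable (\<lambda>n. inverse (fact n) * \<bar>c*u\<bar>^n)" by (rule summable_exp)
  show "\<exists>N. \<forall>n\<ge>N. norm (bc c n * u ^ n) \<le> inverse (fact n) * \<bar>c*u\<bar>^n"
  proof (intro exI allI impI)
    fix n :: nat
    have f1: "(1::real) \<le> fact n" by simp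
    have "norm (bc c n * u ^ n) = \<bar>c*u\<bar>^n / (fact n * fact n)"
      unfolding bc_def real_norm_def abs_mult abs_divide power_abs power_mult_distrib
      by (simp add: power2_eq_square)
    also have "\<dots> \<le> \<bar>c*u\<bar>^n / fact n"
      using f1 by (intro divide_left_mono) (auto intro: mult_pos_pos)
    finally show "norm (bc c n * u ^ n) \<le> inverse (fact n) * \<bar>c*u\<bar>^n"
      by (simp add: field_simps)
  qed
qed

lemma bc_summable1: "summable (\<lambda>k. diffs (bc c) k * u^k)"
  by (rule termdiff_converges_all) (rule bc_summable)
lemma bc_summable2: "summable (\<lambda>k. diffs (diffs (bc c)) k * u^k)"
  by (rule termdiff_converges_all) (rule bc_summable1)
lemma bc_summable3: "summable (\<lambda>k. diffs (diffs (diffs (bc c))) k * u^k)"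
  by (rule termdiff_converges_all) (rule bc_summable2)

lemma GG_deriv: "(GG c has_real_derivative G1 c u) (at u)"
  unfolding GG_def[abs_def] G1_def
  by (rule termdiffs_strong_converges_everywhere) (rule bc_summable)
lemma G1_deriv: "(G1 c has_real_derivative G2 c u) (at u)"
  unfolding G1_def[abs_def] G2_def
  by (rule termdiffs_strong_converges_everywhere) (rule bc_summable1)
lemma G2_deriv: "(G2 c has_real_derivative G3 c u) (at u)"
  unfolding G2_def[abs_def] G3_def
  by (rule termdiffs_strong_converges_everywhere) (rule bc_summable2)

lemma GG_ode: "u * G2 c u + G1 c u = c * GG c u"
proof -
  let ?a = "bc c" let ?d1 = "diffs (bc c)" let ?d2 = "diffs (diffs (bc c))"
  have s1: "summable (\<lambda>n. ?d1 n * u^n)" by (rule bc_summable1)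
  have s2: "summable (\<lambda>n. ?d2 n * u^n)" by (rule bc_summable2)
  have s0: "summable (\<lambda>n. ?a n * u^n)" by (rule bc_summable)
  have e1: "G1 c u = ?d1 0 + (\<Sum>n. ?d1 (Suc n) * u^(Suc n))"
    unfolding G1_def using suminf_split_head[OF s1] by simp
  have e2: "u * G2 c u = (\<Sum>n. ?d2 n * u^(Suc n))"
    unfolding G2_def using suminf_mult[OF s2, of u] by (simp add: algebra_simps)
  have e0: "c * GG c u = c * ?a 0 + (\<Sum>n. c * (?a (Suc n) * u^(Suc n)))"
  proof -
    have "GG c u = ?a 0 + (\<Sum>n. ?a (Suc n) * u^(Suc n))"
      unfolding GG_def using suminf_split_head[OF s0] by simp
    moreover have "(\<Sum>n. c * (?a (Suc n) * u^(Suc n))) = c * (\<Sum>n. ?a (Suc n) * u^(Suc n))"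
    proof -
      have "summable (\<lambda>n. ?a (Suc n) * u^(Suc n))" using summable_ignore_initial_segment[OF s0, of 1] by simp
      from suminf_mult[OF this, of c] show ?thesis by simp
    qed
    ultimately show ?thesis by (simp add: distrib_left)
  qed
  have ss1: "summable (\<lambda>n. ?d1 (Suc n) * u^(Suc n))" using summable_ignore_initial_segment[OF s1, of 1] by simp
  have ss2: "summable (\<lambda>n. ?d2 n * u^(Suc n))" using summable_mult[OF s2, of u] by (simp add: algebra_simps)
  have coef: "?d2 n + ?d1 (Suc n) = c * ?a (Suc n)" for n
  proof -
    have "?d2 n + ?d1 (Suc n) = (real (Suc n) * real (Suc (Suc n)) + real (Suc (Suc n))) * ?a (Suc (Suc n))"
      by (simp add: diffs_def algebra_simps)
    also have "\<dots> = real (Suc (Suc n))^2 * (c^(Suc (Suc n)) / (fact (Suc (Suc n)))^2)"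
      by (simp add: bc_def power2_eq_square algebra_simps)
    also have "\<dots> = c * ?a (Suc n)"
      unfolding bc_def fact_Suc[of "Suc n"] by (simp add: power_mult_distrib)
    finally show ?thesis .
  qed
  have "u * G2 c u + G1 c u = ?d1 0 + (\<Sum>n. ?d2 n * u^(Suc n) + ?d1 (Suc n) * u^(Suc n))"
    using e1 e2 suminf_add[OF ss2 ss1] by simp
  also have "\<dots> = c * ?a 0 + (\<Sum>n. c * (?a (Suc n) * u^(Suc n)))"
  proof -
    have "?d1 0 = c * ?a 0" by (simp add: diffs_def bc_def)
    moreover have "?d2 n * u^(Suc n) + ?d1 (Suc n) * u^(Suc n) = c * (?a (Suc n) * u^(Suc n))" for n
      using coef[of n] by (metis distrib_right mult.assoc)
    ultimately show ?thesis by simp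
  qed
  finally show ?thesis using e0 by simp
qed



lemma GG_0: "GG c 0 = 1" unfolding GG_def using powser_zero[of "bc c"] by (simp add: bc_def)
lemma G1_0: "G1 c 0 = c" unfolding G1_def using powser_zero[of "diffs (bc c)"] by (simp add: bc_def diffs_def)

lemma GG1_lower: assumes "u \<ge> 0" shows "GG 1 u \<ge> 1 + u"
proof -
  have "sum (\<lambda>k. bc 1 k * u^k) {..<2} \<le> GG 1 u"
    unfolding GG_def by (rule sum_le_suminf[OF bc_summable]) (use assms in \<open>auto simp: bc_def\<close>)
  then show ?thesis by (simp add: bc_def numeral_2_eq_2)
qed

lemma diffs_bc: "diffs (bc c) n = c^(Suc n) / (fact n * fact (Suc n))"
proof -
  have f: "(fact n :: real) > 0" by simp
  have "diffs (bc c) n = real (Suc n) * (c^(Suc n) / ((real (Suc n) * fact n) * (real (Suc n) * fact n)))"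
    by (simp add: diffs_def bc_def power2_eq_square fact_Suc[of n] del: of_nat_Suc fact_Suc)
  also have "\<dots> = c^(Suc n) / (fact n * (real (Suc n) * fact n))"
    using f by (simp add: field_simps del: of_nat_Suc)
  finally show ?thesis by (simp add: fact_Suc[of n] del: fact_Suc of_nat_Suc)
qed

lemma G1_num: "G1 (-1) 5 > 0"
proof -
  define b where "b n = (5::real)^n / (fact n * fact (Suc n))" for n
  have bd: "diffs (bc 1) n * 5^n = b n" for n
    by (simp add: diffs_bc b_def)
  have bm: "diffs (bc (-1)) n * 5^n = - ((-1)^n * b n)" for n
    by (simp add: diffs_bc b_def)
  have sb: "summable b" using bc_summable1[of 1 5] unfolding bd .
  have sa: "summable (\<lambda>n. (-1)^n * b n)"
    using summable_minus[OF bc_summable1[of "-1" 5]] unfolding bm by simp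
  have G1e: "G1 (-1) 5 = - (\<Sum>n. (-1)^n * b n)"
    unfolding G1_def bm using suminf_minus[OF sa] by simp
  define a where "a m = b (m+2)" for m
  have ab: "(\<Sum>n. (-1)^n * b n) = (\<Sum>m. (-1)^m * a m) + (1 - 5/2)"
    using suminf_split_initial_segment[OF sa, of 2]
    by (simp add: a_def b_def numeral_2_eq_2)
  have a0: "a \<longlonglongrightarrow> 0"
    unfolding a_def using LIMSEQ_ignore_initial_segment[OF summable_LIMSEQ_zero[OF sb], of 2] by simp
  have apos: "0 \<le> a n" for n by (simp add: a_def b_def)
  have amono: "a (Suc n) \<le> a n" for n
  proof -
    have "a (Suc n) = a n * (5 / ((real n + 3) * (real n + 4)))"
      by (simp add: a_def b_def fact_Suc field_simps)
    also have "\<dots> \<le> a n * 1"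
    proof (rule mult_left_mono)
      have "(3::real) * 4 \<le> (real n + 3) * (real n + 4)" by (rule mult_mono) auto
      then show "5 / ((real n + 3) * (real n + 4)) \<le> 1" by simp
    qed (use apos in auto)
    finally show ?thesis by simp
  qed
  have up: "(\<Sum>i. (-1)^i * a i) \<le> (\<Sum>i<2*2+1. (-1)^i * a i)"
    using summable_Leibniz'(4)[OF a0 apos amono] .
  have "(\<Sum>i<2*2+1. (-1)^i * a i) = (25/12 - 125/144 + 625/2880 - 3125/86400 + 15625/3628800 :: real)"
    by (simp add: a_def b_def lessThan_Suc fact_Suc numeral_eq_Suc)
  then show ?thesis using G1e ab up by simp
qed



lemma GG_cont: "continuous_on S (GG c)"
  by (rule continuous_at_imp_continuous_on) (use GG_deriv DERIV_isCont in blast)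
lemma G1_cont: "continuous_on S (G1 c)"
  by (rule continuous_at_imp_continuous_on) (use G1_deriv DERIV_isCont in blast)
lemma G2_cont: "continuous_on S (G2 c)"
  by (rule continuous_at_imp_continuous_on) (use G2_deriv DERIV_isCont in blast)

lemma J_shoot:
  obtains u1 where "u1 > 0" "G1 (-1) u1 = 0" "\<And>u. 0 \<le> u \<Longrightarrow> u < u1 \<Longrightarrow> G1 (-1) u < 0"
    "GG (-1) u1 < 0" "\<And>s t. 0 \<le> s \<Longrightarrow> s < t \<Longrightarrow> t \<le> u1 \<Longrightarrow> GG (-1) t < GG (-1) s"
proof -
  define S where "S = {0..} \<inter> (G1 (-1)) -` {0}"
  have "\<exists>x\<ge>0. x \<le> 5 \<and> G1 (-1) x = 0"
    by (rule IVT') (use G1_0[of "-1"] G1_num G1_cont in auto)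
  then have Sne: "S \<noteq> {}" unfolding S_def by auto
  have Sbd: "bdd_below S" unfolding S_def by (rule bdd_belowI[of _ 0]) auto
  have Scl: "closed S" unfolding S_def
    by (intro closed_Int closed_atLeast closed_vimage G1_cont closed_singleton)
  define u1 where "u1 = Inf S"
  have u1S: "u1 \<in> S" unfolding u1_def by (rule closed_contains_Inf[OF Sne Sbd Scl])
  have z: "G1 (-1) u1 = 0" using u1S unfolding S_def by auto
  have u1pos: "u1 > 0" using u1S G1_0[of "-1"] unfolding S_def
    by (cases "u1 = 0") auto
  have neg: "G1 (-1) u < 0" if "0 \<le> u" "u < u1" for u
  proof (rule ccontr)
    assume "\<not> G1 (-1) u < 0"
    then have "\<exists>x\<ge>0. x \<le> u \<and> G1 (-1) x = 0"
      by (intro IVT') (use G1_0[of "-1"] G1_cont that in auto)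
    then obtain x where "x \<ge> 0" "x \<le> u" "G1 (-1) x = 0" by blast
    then have "x \<in> S" unfolding S_def by auto
    then have "u1 \<le> x" unfolding u1_def by (rule cInf_lower[OF _ Sbd])
    then show False using \<open>x \<le> u\<close> that by simp
  qed
  have dec: "GG (-1) t < GG (-1) s" if "0 \<le> s" "s < t" "t \<le> u1" for s t
    by (rule DERIV_neg_imp_decreasing_open[OF \<open>s < t\<close>])
       (use GG_deriv neg that GG_cont in \<open>force+\<close>)
  have gneg: "GG (-1) u1 < 0"
  proof (rule ccontr)
    assume a: "\<not> GG (-1) u1 < 0"
    define w where "w u = u * G1 (-1) u" for u
    have wd: "(w has_real_derivative (- GG (-1) x)) (at x)" for x
    proof -
      have "(w has_real_derivative (1 * G1 (-1) x + x * G2 (-1) x)) (at x)"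
        unfolding w_def[abs_def] using DERIV_mult[OF DERIV_ident G1_deriv, of "-1" x] by (simp add: mult.commute)
      then show ?thesis using GG_ode[of x "-1"] by (simp add: algebra_simps)
    qed
    have "w u1 < w 0"
    proof (rule DERIV_neg_imp_decreasing_open[OF u1pos])
      fix x assume "0 < x" "x < u1"
      then have "GG (-1) x > 0" using dec[of x u1] a by auto
      then show "\<exists>y. (w has_real_derivative y) (at x) \<and> y < 0" using wd by force
    next
      show "continuous_on {0..u1} w" unfolding w_def by (intro continuous_intros G1_cont)
    qed
    then show False using z by (simp add: w_def)
  qed
  show ?thesis by (rule that[OF u1pos z neg gneg dec])
qed



lemma g_pos: "u \<ge> 0 \<Longrightarrow> GG 1 u \<ge> 1" using GG1_lower[of u] by simp

lemma P_deriv: "((\<lambda>u. u * G1 1 u) has_real_derivative GG 1 x) (at x)"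
  using DERIV_mult[OF DERIV_ident G1_deriv, of 1 x] GG_ode[of x 1] by (simp add: algebra_simps)

lemma P_mono: assumes "0 \<le> s" "s < t" shows "s * G1 1 s < t * G1 1 t"
proof (rule DERIV_pos_imp_increasing_open[OF assms(2)])
  fix x assume "s < x" "x < t"
  then show "\<exists>y. ((\<lambda>u. u * G1 1 u) has_real_derivative y) (at x) \<and> y > 0"
    using P_deriv[of x] g_pos[of x] assms by (intro exI[of _ "GG 1 x"]) auto
next
  show "continuous_on {s..t} (\<lambda>u. u * G1 1 u)" by (intro continuous_intros G1_cont)
qed

lemma P_pos: "u > 0 \<Longrightarrow> u * G1 1 u > 0" using P_mono[of 0 u] by simp
lemma g1_pos: "u > 0 \<Longrightarrow> G1 1 u > 0" using P_pos[of u] by (simp add: zero_less_mult_iff)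
lemma g1_nonneg: "u \<ge> 0 \<Longrightarrow> G1 1 u \<ge> 0" using g1_pos[of u] G1_0[of 1] by (cases "u = 0") auto

lemma g_mono: assumes "0 \<le> s" "s \<le> t" shows "GG 1 s \<le> GG 1 t"
  by (rule DERIV_nonneg_imp_nondecreasing[OF assms(2)]) (use GG_deriv g1_nonneg assms in force)

definition ff :: "real \<Rightarrow> real" where "ff s = 1 / (s * (GG 1 s)^2)"
definition FF :: "real \<Rightarrow> real" where "FF u = integral {u..} ff"

lemma ff_cont: "0 < a \<Longrightarrow> continuous_on {a..} ff"
  unfolding ff_def
proof (intro continuous_intros GG_cont ballI)
  fix s assume "0 < a" "s \<in> {a..}"
  then show "s * (GG 1 s)^2 \<noteq> 0" using g_pos[of s] by auto
qed
lemma ff_cont2: "0 < a \<Longrightarrow> continuous_on {a..b} ff"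
  using ff_cont by (rule continuous_on_subset) auto

lemma ff_integrable: assumes "u > 0" shows "ff integrable_on {u..}"
proof (rule measurable_bounded_by_integrable_imp_integrable)
  show "ff \<in> borel_measurable (lebesgue_on {u..})"
    by (rule continuous_imp_measurable_on_sets_lebesgue[OF ff_cont[OF assms]]) simp
  show "(\<lambda>x. x powr (-2)) integrable_on {u..}"
    using has_integral_powr_to_inf[of "-2" u] assms by (auto intro: has_integral_integrable)
  show "{u..} \<in> sets lebesgue" by simp
  fix x assume x: "x \<in> {u..}"
  then have xp: "x > 0" using assms by simp
  have g1: "GG 1 x \<ge> 1 + x" using GG1_lower[of x] xp by simp
  have "x \<le> (GG 1 x)^2"
  proof -
    have "0 \<le> x * x" by simp
    then have "x \<le> (1+x)^2" using xp by (simp add: power2_eq_square algebra_simps)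
    also have "\<dots> \<le> (GG 1 x)^2" using g1 xp by (intro power_mono) auto
    finally show ?thesis .
  qed
  then have "x * x \<le> x * (GG 1 x)^2" using xp by simp
  then have "1 / (x * (GG 1 x)^2) \<le> 1 / (x * x)"
    using xp by (intro divide_left_mono) (auto intro!: mult_pos_pos)
  moreover have "ff x \<ge> 0" unfolding ff_def using xp by simp
  ultimately show "norm (ff x) \<le> x powr (-2)"
    using xp by (simp add: ff_def powr_minus powr_realpow power2_eq_square divide_inverse)
qed

lemma FF_split: assumes "0 < a" "a \<le> b" shows "FF a = integral {a..b} ff + FF b"
proof -
  have i1: "(ff has_integral integral {a..b} ff) {a..b}"
    using integrable_continuous_interval[OF ff_cont2[OF assms(1)]] by (simp add: has_integral_integral)
  have i2: "(ff has_integral FF b) {b..}"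
    unfolding FF_def using ff_integrable[of b] assms by (simp add: has_integral_integral)
  have "(ff has_integral (integral {a..b} ff + FF b)) ({a..b} \<union> {b..})"
  proof (rule has_integral_Un[OF i1 i2])
    have "{a..b} \<inter> {b..} = {b}" using assms by auto
    then show "negligible ({a..b} \<inter> {b..})" by simp
  qed
  moreover have "{a..b} \<union> {b..} = {a..}" using assms by auto
  ultimately show ?thesis unfolding FF_def by (simp add: integral_unique)
qed



lemma ff_nonneg: "s > 0 \<Longrightarrow> ff s \<ge> 0" unfolding ff_def by simp

lemma ff_le: assumes xp: "x > 0" shows "ff x \<le> x powr (-2)"
proof -
  have g1: "GG 1 x \<ge> 1 + x" using GG1_lower[of x] xp by simp
  have "x \<le> (GG 1 x)^2"
  proof -
    have "0 \<le> x * x" by simp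
    then have "x \<le> (1+x)^2" using xp by (simp add: power2_eq_square algebra_simps)
    also have "\<dots> \<le> (GG 1 x)^2" using g1 xp by (intro power_mono) auto
    finally show ?thesis .
  qed
  then have "x * x \<le> x * (GG 1 x)^2" using xp by simp
  then have "1 / (x * (GG 1 x)^2) \<le> 1 / (x * x)"
    using xp by (intro divide_left_mono) (auto intro!: mult_pos_pos)
  then show ?thesis
    using xp by (simp add: ff_def powr_minus powr_realpow power2_eq_square divide_inverse)
qed

lemma FF_deriv: assumes "u > 0" shows "(FF has_real_derivative - ff u) (at u)"
proof -
  define a where "a = u / 2"
  have a: "0 < a" "a < u" "u < 2 * u" using assms by (auto simp: a_def)
  have "((\<lambda>x. integral {a..x} ff) has_real_derivative ff u) (at u within {a..2*u})"
    by (rule integral_has_real_derivative[OF ff_cont2[OF a(1)]]) (use a in auto)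
  then have d: "((\<lambda>x. integral {a..x} ff) has_real_derivative ff u) (at u)"
    using at_within_Icc_at[OF a(2,3)] by simp
  have d2: "((\<lambda>x. FF a - integral {a..x} ff) has_real_derivative - ff u) (at u)"
    using DERIV_diff[OF DERIV_const d] by simp
  show ?thesis
  proof (rule has_field_derivative_transform_within_open[OF d2, of "{a<..}"])
    show "open {a<..}" by simp
    show "u \<in> {a<..}" using a by simp
    fix x assume "x \<in> {a<..}"
    then show "FF a - integral {a..x} ff = FF x" using FF_split[of a x] a by simp
  qed
qed

lemma FF_nonneg: "u > 0 \<Longrightarrow> FF u \<ge> 0"
  unfolding FF_def by (rule integral_nonneg[OF ff_integrable]) (auto intro: ff_nonneg)

lemma FF_tail: assumes "R > 0" shows "FF R \<le> 1 / R"
proof -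
  have h: "((\<lambda>x. x powr (-2)) has_integral R powr (-1)) {R..}"
    using has_integral_powr_to_inf[of "-2" R] assms by simp
  have "FF R \<le> integral {R..} (\<lambda>x. x powr (-2))"
    unfolding FF_def
    by (rule integral_le[OF ff_integrable[OF assms] has_integral_integrable[OF h]])
       (use assms ff_le in auto)
  also have "\<dots> = 1 / R" using integral_unique[OF h] assms by (simp add: powr_minus inverse_eq_divide)
  finally show ?thesis .
qed

lemma FF_bound: assumes up: "u > 0" shows "FF u \<le> 1 / (u * G1 1 u * GG 1 u)"
proof -
  define P where "P = u * G1 1 u"
  have Pp: "P > 0" unfolding P_def using P_pos[OF up] .
  have gu: "GG 1 u \<ge> 1" using g_pos up by simp
  define h where "h s = G1 1 s / (P * (GG 1 s)^2)" for s
  have key: "FF u \<le> 1 / (P * GG 1 u) + 1 / R" if R: "R \<ge> u" for R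
  proof -
    have Rp: "R > 0" using R up by simp
    have hint: "(h has_integral ((- 1 / (P * GG 1 R)) - (- 1 / (P * GG 1 u)))) {u..R}"
    proof (rule fundamental_theorem_of_calculus[OF R])
      fix x assume x: "x \<in> {u..R}"
      then have xp: "x > 0" using up by simp
      have gx: "GG 1 x \<ge> 1" using g_pos xp by simp
      have "((\<lambda>s. - 1 / (P * GG 1 s)) has_real_derivative
              ((0 * (P * GG 1 x) - (- 1) * (P * G1 1 x)) / ((P * GG 1 x) * (P * GG 1 x)))) (at x)"
        by (rule DERIV_divide[OF DERIV_const DERIV_cmult[OF GG_deriv]]) (use Pp gx in auto)
      moreover have "((0 * (P * GG 1 x) - (- 1) * (P * G1 1 x)) / ((P * GG 1 x) * (P * GG 1 x))) = h x"
        unfolding h_def using Pp gx by (simp add: field_simps power2_eq_square)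
      ultimately show "((\<lambda>s. - 1 / (P * GG 1 s)) has_vector_derivative h x) (at x within {u..R})"
        by (simp add: has_real_derivative_iff_has_vector_derivative[symmetric] has_field_derivative_at_within)
    qed
    have "integral {u..R} ff \<le> integral {u..R} h"
    proof (rule integral_le)
      show "ff integrable_on {u..R}" by (rule integrable_continuous_interval[OF ff_cont2[OF up]])
      show "h integrable_on {u..R}" using hint by (rule has_integral_integrable)
      fix s assume s: "s \<in> {u..R}"
      then have sp: "s > 0" using up by simp
      have gs: "GG 1 s \<ge> 1" using g_pos sp by simp
      have "P \<le> s * G1 1 s" unfolding P_def
        using P_mono[of u s] up s by (cases "u = s") auto
      then have "1 / s \<le> G1 1 s / P" using sp Pp by (simp add: field_simps)
      then have "(1 / s) / (GG 1 s)^2 \<le> (G1 1 s / P) / (GG 1 s)^2"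
        by (rule divide_right_mono) simp
      then show "ff s \<le> h s" unfolding ff_def h_def by (simp add: field_simps)
    qed
    also have "\<dots> = 1 / (P * GG 1 u) - 1 / (P * GG 1 R)" using integral_unique[OF hint] by simp
    also have "\<dots> \<le> 1 / (P * GG 1 u)" using Pp g_pos[of R] Rp by simp
    finally have "integral {u..R} ff \<le> 1 / (P * GG 1 u)" .
    moreover have "FF u = integral {u..R} ff + FF R" using FF_split[OF up R] .
    ultimately show ?thesis using FF_tail[OF Rp] by simp
  qed
  have "FF u \<le> 1 / (P * GG 1 u)"
  proof (rule ccontr)
    assume "\<not> ?thesis"
    then have e: "FF u - 1 / (P * GG 1 u) > 0" by simp
    define R where "R = max u (2 / (FF u - 1 / (P * GG 1 u)))"
    have R1: "R \<ge> u" unfolding R_def by simp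
    have R2: "R \<ge> 2 / (FF u - 1 / (P * GG 1 u))" unfolding R_def by simp
    have Rp: "R > 0" using R1 up by simp
    have "1 / R \<le> (FF u - 1 / (P * GG 1 u)) / 2"
      using R2 e Rp by (simp add: field_simps)
    then show False using key[OF R1] e by simp
  qed
  then show ?thesis unfolding P_def by simp
qed

lemma FF_pos: assumes up: "u > 0" shows "FF u > 0"
proof -
  define m where "m = 1 / ((u+1) * (GG 1 (u+1))^2)"
  have gp: "GG 1 (u+1) \<ge> 1" using g_pos up by simp
  have mp: "m > 0" unfolding m_def using up gp by simp
  have "m \<le> integral {u..u+1} ff"
  proof -
    have "integral {u..u+1} (\<lambda>_. m) \<le> integral {u..u+1} ff"
    proof (rule integral_le)
      show "(\<lambda>_. m) integrable_on {u..u+1}" by (rule integrable_continuous_interval) simp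
      show "ff integrable_on {u..u+1}" by (rule integrable_continuous_interval[OF ff_cont2[OF up]])
      fix s assume s: "s \<in> {u..u+1}"
      then have sp: "s > 0" using up by simp
      have gs: "GG 1 s \<ge> 1" using g_pos sp by simp
      have "GG 1 s \<le> GG 1 (u+1)" using g_mono[of s "u+1"] s sp by simp
      then have "(GG 1 s)^2 \<le> (GG 1 (u+1))^2" using gs by (intro power_mono) auto
      then have "s * (GG 1 s)^2 \<le> (u+1) * (GG 1 (u+1))^2" using s sp by (intro mult_mono) auto
      then show "m \<le> ff s" unfolding m_def ff_def using sp gs up gp
        by (intro divide_left_mono) (auto intro!: mult_pos_pos)
    qed
    then show ?thesis by simp
  qed
  moreover have "FF u = integral {u..u+1} ff + FF (u+1)" using FF_split[OF up] by simp
  moreover have "FF (u+1) \<ge> 0" using FF_nonneg up by simp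
  ultimately show ?thesis using mp by simp
qed



definition kk :: "real \<Rightarrow> real" where "kk u = GG 1 u * FF u"
definition kk1 :: "real \<Rightarrow> real" where "kk1 u = G1 1 u * FF u - 1 / (u * GG 1 u)"
definition kk2 :: "real \<Rightarrow> real" where "kk2 u = G2 1 u * FF u + 1 / (u^2 * GG 1 u)"

lemma kk_deriv: assumes "u > 0" shows "(kk has_real_derivative kk1 u) (at u)"
proof -
  have gu: "GG 1 u \<ge> 1" using g_pos assms by simp
  have "(kk has_real_derivative (GG 1 u * (- ff u) + G1 1 u * FF u)) (at u)"
    unfolding kk_def[abs_def] by (rule DERIV_mult'[OF GG_deriv FF_deriv[OF assms]])
  moreover have "GG 1 u * (- ff u) + G1 1 u * FF u = kk1 u"
    unfolding kk1_def ff_def using gu assms by (simp add: field_simps power2_eq_square)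
  ultimately show ?thesis by simp
qed

lemma kk1_deriv: assumes "u > 0" shows "(kk1 has_real_derivative kk2 u) (at u)"
proof -
  have gu: "GG 1 u \<ge> 1" using g_pos assms by simp
  have d1: "((\<lambda>u. G1 1 u * FF u) has_real_derivative (G1 1 u * (- ff u) + G2 1 u * FF u)) (at u)"
    by (rule DERIV_mult'[OF G1_deriv FF_deriv[OF assms]])
  have d0: "((\<lambda>u. u * GG 1 u) has_real_derivative (1 * GG 1 u + u * G1 1 u)) (at u)"
    using DERIV_mult'[OF DERIV_ident GG_deriv[of 1 u]] by (simp add: algebra_simps)
  have d2: "((\<lambda>u. 1 / (u * GG 1 u)) has_real_derivative
      ((0 * (u * GG 1 u) - 1 * (1 * GG 1 u + u * G1 1 u)) / ((u * GG 1 u) * (u * GG 1 u)))) (at u)"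
    by (rule DERIV_divide[OF DERIV_const d0]) (use gu assms in auto)
  have "(kk1 has_real_derivative (G1 1 u * (- ff u) + G2 1 u * FF u) -
      ((0 * (u * GG 1 u) - 1 * (1 * GG 1 u + u * G1 1 u)) / ((u * GG 1 u) * (u * GG 1 u)))) (at u)"
    unfolding kk1_def[abs_def] by (rule DERIV_diff[OF d1 d2])
  moreover have "(G1 1 u * (- ff u) + G2 1 u * FF u) -
      ((0 * (u * GG 1 u) - 1 * (1 * GG 1 u + u * G1 1 u)) / ((u * GG 1 u) * (u * GG 1 u))) = kk2 u"
    unfolding kk2_def ff_def using gu assms by (simp add: field_simps power2_eq_square)
  ultimately show ?thesis by simp
qed

lemma kk_ode: assumes "u > 0" shows "u * kk2 u + kk1 u = kk u"
proof -
  have gu: "GG 1 u \<ge> 1" using g_pos assms by simp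
  have "u * kk2 u + kk1 u = FF u * (u * G2 1 u + G1 1 u)"
    unfolding kk2_def kk1_def using gu assms by (simp add: field_simps power2_eq_square)
  also have "\<dots> = kk u" unfolding kk_def using GG_ode[of u 1] by simp
  finally show ?thesis .
qed

lemma kk_pos: "u > 0 \<Longrightarrow> kk u > 0"
  unfolding kk_def using g_pos[of u] FF_pos[of u] by simp

lemma kk1_nonpos: assumes "u > 0" shows "kk1 u \<le> 0"
proof -
  have gu: "GG 1 u \<ge> 1" using g_pos assms by simp
  have g1: "G1 1 u > 0" using g1_pos assms by simp
  have "G1 1 u * FF u \<le> G1 1 u * (1 / (u * G1 1 u * GG 1 u))"
    using FF_bound[OF assms] g1 by (intro mult_left_mono) auto
  also have "\<dots> = 1 / (u * GG 1 u)" using g1 by simp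
  finally show ?thesis unfolding kk1_def by simp
qed

lemma kk_bound: assumes "0 < u0" "u0 \<le> u" shows "kk u \<le> 1 / (u0 * G1 1 u0)"
proof -
  have up: "u > 0" using assms by simp
  have gu: "GG 1 u \<ge> 1" using g_pos up by simp
  have g1: "G1 1 u > 0" using g1_pos up by simp
  have "kk u \<le> GG 1 u * (1 / (u * G1 1 u * GG 1 u))"
    unfolding kk_def using FF_bound[OF up] gu by (intro mult_left_mono) auto
  also have "\<dots> = 1 / (u * G1 1 u)" using gu by simp
  also have "\<dots> \<le> 1 / (u0 * G1 1 u0)"
    using P_pos[OF assms(1)] P_mono[of u0 u] assms by (cases "u0 = u") (auto intro!: divide_left_mono)
  finally show ?thesis .
qed

lemma radial:
  fixes g gd gdd :: "real \<Rightarrow> real" and lam r :: real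
  assumes "(g has_real_derivative gd (lam*r^2)) (at (lam*r^2))"
    and "(gd has_real_derivative gdd (lam*r^2)) (at (lam*r^2))"
  shows "((\<lambda>r. g (lam*r^2)) has_real_derivative gd (lam*r^2) * (2*lam*r)) (at r)"
    and "((\<lambda>r. gd (lam*r^2) * (2*lam*r)) has_real_derivative
           gdd (lam*r^2) * (2*lam*r)^2 + gd (lam*r^2) * (2*lam)) (at r)"
proof -
  have i: "((\<lambda>r. lam * r^2) has_real_derivative 2*lam*r) (at r)"
  proof -
    have "((\<lambda>r. lam * r^2) has_real_derivative lam * (2 * r)) (at r)"
      using DERIV_cmult[OF DERIV_pow[of 2 r], of lam] by simp
    then show ?thesis by (simp add: algebra_simps)
  qed
  show "((\<lambda>r. g (lam*r^2)) has_real_derivative gd (lam*r^2) * (2*lam*r)) (at r)"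
    by (rule DERIV_chain2[OF assms(1) i])
  have a: "((\<lambda>r. gd (lam*r^2)) has_real_derivative gdd (lam*r^2) * (2*lam*r)) (at r)"
    by (rule DERIV_chain2[OF assms(2) i])
  have b: "((\<lambda>r. 2*lam*r) has_real_derivative 2*lam) (at r)"
    using DERIV_cmult[OF DERIV_ident, of "2*lam"] by simp
  show "((\<lambda>r. gd (lam*r^2) * (2*lam*r)) has_real_derivative
           gdd (lam*r^2) * (2*lam*r)^2 + gd (lam*r^2) * (2*lam)) (at r)"
    using DERIV_mult[OF a b] by (simp add: power2_eq_square algebra_simps)
qed

lemma radial_ode:
  fixes g gd gdd :: "real \<Rightarrow> real" and lam r c :: real
  assumes "r \<noteq> 0" "(lam*r^2) * gdd (lam*r^2) + gd (lam*r^2) = c * g (lam*r^2)"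
  shows "(gdd (lam*r^2) * (2*lam*r)^2 + gd (lam*r^2) * (2*lam)) + (gd (lam*r^2) * (2*lam*r)) / r
     = 4 * lam * c * g (lam*r^2)"
proof -
  have "(gdd (lam*r^2) * (2*lam*r)^2 + gd (lam*r^2) * (2*lam)) + (gd (lam*r^2) * (2*lam*r)) / r
     = 4 * lam * ((lam*r^2) * gdd (lam*r^2) + gd (lam*r^2))"
    using assms(1) by (simp add: field_simps power2_eq_square)
  then show ?thesis using assms(2) by simp
qed

lemma piece_deriv:
  fixes f g :: "real \<Rightarrow> real"
  assumes "(f has_real_derivative d) (at x0)" "(g has_real_derivative d) (at x0)" "f x0 = g x0"
  shows "((\<lambda>x. if x \<le> x0 then f x else g x) has_real_derivative d) (at x0)"
proof -
  let ?p = "\<lambda>x. if x \<le> x0 then f x else g x"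
  have l: "(?p has_real_derivative d) (at x0 within {..x0})"
    by (rule has_field_derivative_transform_within[OF has_field_derivative_at_within[OF assms(1)], of 1])
       auto
  have r: "(?p has_real_derivative d) (at x0 within {x0..})"
    by (rule has_field_derivative_transform_within[OF has_field_derivative_at_within[OF assms(2)], of 1])
       (use assms(3) in auto)
  show ?thesis
    using l r unfolding has_field_derivative_iff
    by (intro Lim_Un_univ[of _ _ _ "{..x0}" "{x0..}"]) auto
qed

lemma piece_cont:
  fixes f g :: "real \<Rightarrow> real"
  assumes "isCont f x0" "isCont g x0" "f x0 = g x0"
  shows "isCont (\<lambda>x. if x \<le> x0 then f x else g x) x0"
proof -
  let ?p = "\<lambda>x. if x \<le> x0 then f x else g x"
  have l: "(?p \<longlongrightarrow> f x0) (at x0 within {..x0})"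
  proof -
    have "continuous (at x0 within {..x0}) f" using assms(1) by (rule continuous_at_imp_continuous_at_within)
    then have "(f \<longlongrightarrow> f x0) (at x0 within {..x0})" by (simp add: continuous_within)
    then show ?thesis
      by (rule Lim_transform_within[of _ _ _ _ 1]) auto
  qed
  have r: "(?p \<longlongrightarrow> f x0) (at x0 within {x0..})"
  proof -
    have "continuous (at x0 within {x0..}) g" using assms(2) by (rule continuous_at_imp_continuous_at_within)
    then have "(g \<longlongrightarrow> f x0) (at x0 within {x0..})" using assms(3) by (simp add: continuous_within)
    then show ?thesis
      by (rule Lim_transform_within[of _ _ _ _ 1]) (use assms(3) in auto)
  qed
  have "(?p \<longlongrightarrow> f x0) (at x0)"
    using l r by (intro Lim_Un_univ[of _ _ _ "{..x0}" "{x0..}"]) auto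
  then show ?thesis unfolding isCont_def by simp
qed



lemma piece_at:
  fixes f g f' g' :: "real \<Rightarrow> real"
  assumes "\<And>x. x \<le> x0 \<Longrightarrow> (f has_real_derivative f' x) (at x)"
    and "\<And>x. x \<ge> x0 \<Longrightarrow> (g has_real_derivative g' x) (at x)"
    and "f x0 = g x0" "f' x0 = g' x0"
  shows "((\<lambda>x. if x \<le> x0 then f x else g x) has_real_derivative (if x \<le> x0 then f' x else g' x)) (at x)"
proof (cases x x0 rule: linorder_cases)
  case less
  have "((\<lambda>x. if x \<le> x0 then f x else g x) has_real_derivative f' x) (at x)"
    by (rule has_field_derivative_transform_within_open[OF assms(1)[of x], of "{..<x0}"])
       (use less in auto)
  then show ?thesis using less by simp
next
  case equal
  have a1: "(f has_real_derivative f' x0) (at x0)" using assms(1)[of x0] by simp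
  have a2: "(g has_real_derivative f' x0) (at x0)" using assms(2)[of x0] assms(4) by simp
  show ?thesis using piece_deriv[OF a1 a2 assms(3)] equal by simp
next
  case greater
  have "((\<lambda>x. if x \<le> x0 then f x else g x) has_real_derivative g' x) (at x)"
    by (rule has_field_derivative_transform_within_open[OF assms(2)[of x], of "{x0<..}"])
       (use greater in auto)
  then show ?thesis using greater by simp
qed

lemma piece_isCont:
  fixes f g :: "real \<Rightarrow> real"
  assumes "\<And>x. x \<le> x0 \<Longrightarrow> isCont f x"
    and "\<And>x. x \<ge> x0 \<Longrightarrow> isCont g x"
    and "f x0 = g x0"
  shows "isCont (\<lambda>x. if x \<le> x0 then f x else g x) x"
proof (cases x x0 rule: linorder_cases)
  case less
  have "eventually (\<lambda>y. y \<in> {..<x0}) (nhds x)" by (rule eventually_nhds_in_open) (use less in auto)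
  then have "eventually (\<lambda>y. (if y \<le> x0 then f y else g y) = f y) (nhds x)"
    by (rule eventually_mono) auto
  then have "isCont (\<lambda>y. if y \<le> x0 then f y else g y) x = isCont f x" by (rule isCont_cong)
  then show ?thesis using assms(1)[of x] less by simp
next
  case equal
  have a1: "isCont f x0" using assms(1)[of x0] by simp
  have a2: "isCont g x0" using assms(2)[of x0] by simp
  show ?thesis using piece_cont[OF a1 a2 assms(3)] equal by simp
next
  case greater
  have "eventually (\<lambda>y. y \<in> {x0<..}) (nhds x)" by (rule eventually_nhds_in_open) (use greater in auto)
  then have "eventually (\<lambda>y. (if y \<le> x0 then f y else g y) = g y) (nhds x)"
    by (rule eventually_mono) auto
  then have "isCont (\<lambda>y. if y \<le> x0 then f y else g y) x = isCont g x" by (rule isCont_cong)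
  then show ?thesis using assms(2)[of x] greater by simp
qed



theorem mainTheorem1:
  fixes D chi \<epsilon> a \<beta> b :: real
  assumes "D > 0" and "chi > 0" and "\<epsilon> > 0" and "a > 0" and "\<beta> > 0"
    and "b = D * \<beta>\<^sup>2"
    and "a * chi / (D * \<epsilon>) - \<beta>\<^sup>2 > 0"
  shows "\<exists>\<rho>0 \<phi>0 r0 (\<rho>::real \<Rightarrow> real) (\<phi>::real \<Rightarrow> real) \<phi>' \<phi>'' dp.
     \<rho>0 > 0 \<and> \<phi>0 > 0 \<and> r0 > 0 \<and>
     continuous_on {0..} \<rho> \<and>
     (\<forall>r\<ge>0. (\<phi> has_real_derivative \<phi>' r) (at r within {0..})) \<and>
     (\<forall>r\<ge>0. (\<phi>' has_real_derivative \<phi>'' r) (at r within {0..})) \<and>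
     continuous_on {0..} \<phi>'' \<and>
     (\<forall>r\<ge>0. \<rho> r \<ge> 0) \<and> (\<forall>r\<ge>0. \<phi> r \<ge> 0) \<and>
     bounded (\<phi> ` {0..}) \<and>
     (\<forall>r>0. ((\<lambda>s. \<epsilon> / 2 * (\<rho> s)\<^sup>2) has_real_derivative dp r) (at r)) \<and>
     (\<forall>r>0. dp r = chi * \<rho> r * \<phi>' r) \<and>
     (\<forall>r>0. D * \<phi>'' r + D * \<phi>' r / r + a * \<rho> r - b * \<phi> r = 0) \<and>
     \<rho> 0 = \<rho>0 \<and> \<phi> 0 = \<phi>0 \<and>
     (\<forall>r. 0 \<le> r \<and> r < r0 \<longrightarrow> \<rho> r > 0) \<and>
     (\<forall>r\<ge>r0. \<rho> r = 0)"
proof -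
  note Dp = assms(1) and chip = assms(2) and ep = assms(3) and ap = assms(4) and bp = assms(5)
  define \<kappa> where "\<kappa> = a * chi / (D * \<epsilon>)"
  define w2 where "w2 = \<kappa> - \<beta>^2"
  have w2p: "w2 > 0" using assms(7) unfolding w2_def \<kappa>_def by simp
  have kap: "a * chi / \<epsilon> = D * \<kappa>" unfolding \<kappa>_def using Dp ep by simp
  define lJ where "lJ = w2 / 4"
  define lK where "lK = \<beta>^2 / 4"
  have lJp: "lJ > 0" and lKp: "lK > 0" using w2p bp by (auto simp: lJ_def lK_def)
  define J where "J r = GG (-1) (lJ * r^2)" for r
  define J1 where "J1 r = G1 (-1) (lJ * r^2) * (2 * lJ * r)" for r
  define J2 where "J2 r = G2 (-1) (lJ * r^2) * (2 * lJ * r)^2 + G1 (-1) (lJ * r^2) * (2 * lJ)" for r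
  define K where "K r = kk (lK * r^2)" for r
  define K1 where "K1 r = kk1 (lK * r^2) * (2 * lK * r)" for r
  define K2 where "K2 r = \<beta>^2 * K r - K1 r / r" for r
  have Jd: "(J has_real_derivative J1 r) (at r)" for r
    unfolding J_def[abs_def] J1_def by (rule radial(1)[where g="GG (-1)" and gd="G1 (-1)" and gdd="G2 (-1)" and lam=lJ and r=r, OF GG_deriv G1_deriv])
  have J1d: "(J1 has_real_derivative J2 r) (at r)" for r
    unfolding J1_def[abs_def] J2_def by (rule radial(2)[where g="GG (-1)" and gd="G1 (-1)" and gdd="G2 (-1)" and lam=lJ and r=r, OF GG_deriv G1_deriv])
  have Jode: "J2 r + J1 r / r = - w2 * J r" if "r \<noteq> 0" for r
    using radial_ode[where r=r and gdd="G2 (-1)" and lam=lJ and gd="G1 (-1)" and c="-1" and g="GG (-1)", OF that GG_ode[of "lJ * r^2" "-1"]]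
    unfolding J_def J1_def J2_def lJ_def by simp
  have Kpos: "K r > 0" if "r > 0" for r unfolding K_def using kk_pos lKp that by simp
  have Kd: "(K has_real_derivative K1 r) (at r)" if "r > 0" for r
  proof -
    have u: "lK * r^2 > 0" using lKp that by simp
    show ?thesis unfolding K_def[abs_def] K1_def by (rule radial(1)[where g=kk and gd=kk1 and gdd=kk2 and lam=lK and r=r, OF kk_deriv[OF u] kk1_deriv[OF u]])
  qed
  have K1d: "(K1 has_real_derivative K2 r) (at r)" if "r > 0" for r
  proof -
    have u: "lK * r^2 > 0" using lKp that by simp
    have "(K1 has_real_derivative kk2 (lK * r^2) * (2 * lK * r)^2 + kk1 (lK * r^2) * (2 * lK)) (at r)"
      unfolding K1_def[abs_def] by (rule radial(2)[where g=kk and gd=kk1 and gdd=kk2 and lam=lK and r=r, OF kk_deriv[OF u] kk1_deriv[OF u]])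
    moreover have "kk2 (lK * r^2) * (2 * lK * r)^2 + kk1 (lK * r^2) * (2 * lK) = K2 r"
      using radial_ode[where r=r and gdd=kk2 and lam=lK and gd=kk1 and c=1 and g=kk] kk_ode[OF u] that
      unfolding K2_def K_def K1_def lK_def by (simp add: algebra_simps)
    ultimately show ?thesis by simp
  qed
  have K1np: "K1 r \<le> 0" if "r > 0" for r
    unfolding K1_def using kk1_nonpos[of "lK * r^2"] lKp that by (simp add: mult_nonpos_nonneg)
  obtain u1 where u1p: "u1 > 0" and u1z: "G1 (-1) u1 = 0"
    and u1n: "\<And>u. 0 \<le> u \<Longrightarrow> u < u1 \<Longrightarrow> G1 (-1) u < 0"
    and u1g: "GG (-1) u1 < 0"
    and u1d: "\<And>s t. 0 \<le> s \<Longrightarrow> s < t \<Longrightarrow> t \<le> u1 \<Longrightarrow> GG (-1) t < GG (-1) s"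
    using J_shoot by blast
  define y where "y = sqrt (u1 / lJ)"
  have yp: "y > 0" unfolding y_def using u1p lJp by simp
  have yu: "lJ * y^2 = u1" unfolding y_def using u1p lJp by simp
  have J0: "J 0 = 1" unfolding J_def by (simp add: GG_0)
  have Jy: "J y < 0" unfolding J_def yu using u1g .
  have J1y: "J1 y = 0" unfolding J1_def yu using u1z by simp
  have rsq: "lJ * s^2 < lJ * t^2" if "0 \<le> s" "s < t" for s t
    using that lJp by (intro mult_strict_left_mono power_strict_mono) auto
  have rsq2: "lJ * s^2 \<le> lJ * t^2" if "0 \<le> s" "s \<le> t" for s t
    using that lJp by (intro mult_left_mono power_mono) auto
  have Jdec: "J t < J s" if "0 \<le> s" "s < t" "t \<le> y" for s t
    unfolding J_def using u1d[OF _ rsq[OF that(1,2)]] rsq2[of t y] that yu lJp by simp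
  have Jdec2: "J t \<le> J s" if "0 \<le> s" "s \<le> t" "t \<le> y" for s t
    using Jdec[of s t] that by (cases "s = t") auto
  have J1n: "J1 r < 0" if "0 < r" "r < y" for r
  proof -
    have "G1 (-1) (lJ * r^2) < 0" using u1n[of "lJ * r^2"] rsq[of r y] that yu lJp by simp
    moreover have "2 * lJ * r > 0" using lJp that by simp
    ultimately show ?thesis unfolding J1_def by (simp add: mult_neg_pos)
  qed
  have Jcont: "continuous_on S J" for S
    by (rule continuous_at_imp_continuous_on) (use Jd DERIV_isCont in blast)
  obtain z where z0: "0 \<le> z" "z \<le> y" and Jz: "J z = 0"
    using IVT2'[of J y 0 0] Jy J0 yp Jcont by force
  have zp: "z > 0" using Jz J0 z0 by (cases "z = 0") auto
  have zy: "z < y" using Jz Jy z0 by (cases "z = y") auto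
  define Ff where "Ff r = J r * K1 r + (\<beta>^2 / w2) * J1 r * K r" for r
  have Ffz: "Ff z < 0"
  proof -
    have "J1 z < 0" using J1n zp zy by simp
    moreover have "K z > 0" using Kpos zp by simp
    moreover have "\<beta>^2 / w2 > 0" using bp w2p by simp
    ultimately have "(\<beta>^2 / w2) * J1 z * K z < 0" by (intro mult_neg_pos mult_pos_neg)
    then show ?thesis unfolding Ff_def using Jz by simp
  qed
  have Ffy: "Ff y \<ge> 0"
    unfolding Ff_def using J1y Jy K1np[OF yp] by (simp add: mult_nonpos_nonpos)
  have Ffcont: "continuous_on {z..y} Ff"
  proof -
    have "isCont Ff x" if "x \<in> {z..y}" for x
    proof -
      have xp: "x > 0" using that zp by simp
      show ?thesis unfolding Ff_def[abs_def]
        using DERIV_isCont[OF Jd] DERIV_isCont[OF J1d] DERIV_isCont[OF Kd[OF xp]] DERIV_isCont[OF K1d[OF xp]]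
        by (intro continuous_intros) auto
    qed
    then show ?thesis by (intro continuous_at_imp_continuous_on) auto
  qed
  obtain r0 where r0a: "z \<le> r0" "r0 \<le> y" and Ffr0: "Ff r0 = 0"
    using IVT'[of Ff z 0 y] Ffz Ffy zy Ffcont by force
  have zr0: "z < r0" using Ffz Ffr0 r0a by (cases "z = r0") auto
  have r0p: "r0 > 0" using zp zr0 by simp
  have Jr0: "J r0 < 0" using Jdec[of z r0] zr0 z0 r0a Jz by simp
  have Kr0: "K r0 > 0" using Kpos r0p by simp
  define A where "A = - (\<beta>^2 / w2) / J r0"
  define B where "B = 1 / K r0"
  have Ap: "A > 0"
  proof -
    have "\<beta>^2 / w2 > 0" using bp w2p by simp
    then have "(\<beta>^2 / w2) / J r0 < 0" by (rule divide_pos_neg[OF _ Jr0])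
    then show ?thesis unfolding A_def by linarith
  qed
  have Bp: "B > 0" unfolding B_def using Kr0 by simp
  define pin where "pin r = A * J r + \<kappa> / w2" for r
  define pin1 where "pin1 r = A * J1 r" for r
  define pin2 where "pin2 r = A * J2 r" for r
  define pout where "pout r = B * K r" for r
  define pout1 where "pout1 r = B * K1 r" for r
  define pout2 where "pout2 r = B * K2 r" for r
  define rin where "rin r = chi / \<epsilon> * (pin r - 1)" for r
  have AJr0: "A * J r0 = - (\<beta>^2 / w2)" unfolding A_def using Jr0 by simp
  have pin_r0: "pin r0 = 1"
  proof -
    have "pin r0 = (\<kappa> - \<beta>^2) / w2" unfolding pin_def AJr0 by (simp add: diff_divide_distrib)
    then show ?thesis using w2p unfolding w2_def by simp
  qed
  have pout_r0: "pout r0 = 1" unfolding pout_def B_def using Kr0 by simp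
  have rin_r0: "rin r0 = 0" unfolding rin_def pin_r0 by simp
  have match1: "pin1 r0 = pout1 r0"
  proof -
    have "J r0 * K1 r0 = - (\<beta>^2 / w2) * J1 r0 * K r0" using Ffr0 unfolding Ff_def by simp
    then have "K1 r0 / K r0 = A * J1 r0" unfolding A_def using Jr0 Kr0 w2p by (simp add: field_simps)
    then show ?thesis unfolding pin1_def pout1_def B_def by simp
  qed
  have pin_ode: "pin2 r + pin1 r / r = \<kappa> - w2 * pin r" if "r \<noteq> 0" for r
  proof -
    have "pin2 r + pin1 r / r = A * (J2 r + J1 r / r)" unfolding pin2_def pin1_def by (simp add: algebra_simps)
    also have "\<dots> = \<kappa> - w2 * pin r" unfolding Jode[OF that] pin_def using w2p by (simp add: field_simps)
    finally show ?thesis .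
  qed
  have pout_ode: "pout2 r + pout1 r / r = \<beta>^2 * pout r" for r
    unfolding pout2_def pout1_def pout_def K2_def by (simp add: algebra_simps)
  have match2: "pin2 r0 = pout2 r0"
    using pin_ode[of r0] pout_ode[of r0] pin_r0 pout_r0 match1 r0p unfolding w2_def by simp
  have pind: "(pin has_real_derivative pin1 r) (at r)" for r
    unfolding pin_def[abs_def] pin1_def using DERIV_add[OF DERIV_cmult[OF Jd, of A] DERIV_const[of "\<kappa> / w2"]] by simp
  have pin1d: "(pin1 has_real_derivative pin2 r) (at r)" for r
    unfolding pin1_def[abs_def] pin2_def using DERIV_cmult[OF J1d, of A] by simp
  have poutd: "(pout has_real_derivative pout1 r) (at r)" if "r > 0" for r
    unfolding pout_def[abs_def] pout1_def using DERIV_cmult[OF Kd[OF that], of B] by simp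
  have pout1d: "(pout1 has_real_derivative pout2 r) (at r)" if "r > 0" for r
    unfolding pout1_def[abs_def] pout2_def using DERIV_cmult[OF K1d[OF that], of B] by simp
  have rind: "(rin has_real_derivative chi / \<epsilon> * pin1 r) (at r)" for r
    unfolding rin_def[abs_def] using DERIV_cmult[OF DERIV_diff[OF pind DERIV_const[of 1]], of "chi / \<epsilon>"] by simp
  define \<rho> where "\<rho> r = (if r \<le> r0 then rin r else 0)" for r
  define \<phi> where "\<phi> r = (if r \<le> r0 then pin r else pout r)" for r
  define \<phi>' where "\<phi>' r = (if r \<le> r0 then pin1 r else pout1 r)" for r
  define \<phi>'' where "\<phi>'' r = (if r \<le> r0 then pin2 r else pout2 r)" for r
  define dp where "dp r = chi * \<rho> r * \<phi>' r" for r
  have pin_m1: "pin r - 1 = A * (J r - J r0)" for r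
    using pin_r0 unfolding pin_def by (simp add: algebra_simps)
  have Jle: "J r0 \<le> J r" "J r \<le> 1" if "0 \<le> r" "r \<le> r0" for r
    using Jdec2[of r r0] Jdec2[of 0 r] that r0a J0 by auto
  have pin_ge: "pin r \<ge> 1" if "0 \<le> r" "r \<le> r0" for r
  proof -
    have "A * (J r - J r0) \<ge> 0" using Jle[OF that] Ap by (intro mult_nonneg_nonneg) auto
    then show ?thesis using pin_m1[of r] by linarith
  qed
  have pin_le: "pin r \<le> A + \<kappa> / w2" if "0 \<le> r" "r \<le> r0" for r
    using Jle[OF that] Ap unfolding pin_def by (simp add: mult_left_le)
  have rin_pos: "rin r > 0" if "0 \<le> r" "r < r0" for r
  proof -
    have "J r0 < J r" using Jdec[of r r0] that r0a by simp
    then have "pin r - 1 > 0" using pin_m1[of r] Ap by simp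
    then show ?thesis unfolding rin_def using chip ep by simp
  qed
  have rin_nn: "rin r \<ge> 0" if "0 \<le> r" "r \<le> r0" for r
    unfolding rin_def using pin_ge[OF that] chip ep by simp
  have rho_cont: "continuous_on {0..} \<rho>"
  proof (intro continuous_at_imp_continuous_on ballI)
    fix x :: real
    show "isCont \<rho> x" unfolding \<rho>_def[abs_def]
      by (rule piece_isCont) (use DERIV_isCont[OF rind] rin_r0 in auto)
  qed
  have phi_d: "(\<phi> has_real_derivative \<phi>' r) (at r)" for r
    unfolding \<phi>_def[abs_def] \<phi>'_def
    by (rule piece_at) (use pind poutd r0p pin_r0 pout_r0 match1 in auto)
  have phi1_d: "(\<phi>' has_real_derivative \<phi>'' r) (at r)" for r
    unfolding \<phi>'_def[abs_def] \<phi>''_def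
    by (rule piece_at) (use pin1d pout1d r0p match1 match2 in auto)
  have G2c: "isCont (\<lambda>r. G2 (-1) (lJ*r^2)) x" for x
    by (rule isCont_o2[OF _ DERIV_isCont[OF G2_deriv]]) simp
  have G1c: "isCont (\<lambda>r. G1 (-1) (lJ*r^2)) x" for x
    by (rule isCont_o2[OF _ DERIV_isCont[OF G1_deriv]]) simp
  have pin2c: "isCont pin2 x" for x
    unfolding pin2_def[abs_def] J2_def by (intro continuous_intros G1c G2c)
  have pout2c: "isCont pout2 x" if "x > 0" for x
    unfolding pout2_def[abs_def] K2_def
    using DERIV_isCont[OF Kd[OF that]] DERIV_isCont[OF K1d[OF that]] that
    by (intro continuous_intros) auto
  have phi2_cont: "continuous_on {0..} \<phi>''"
  proof (intro continuous_at_imp_continuous_on ballI)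
    fix x :: real
    show "isCont \<phi>'' x" unfolding \<phi>''_def[abs_def]
      by (rule piece_isCont) (use pin2c pout2c r0p match2 in auto)
  qed
  have rho_nn: "\<rho> r \<ge> 0" if "r \<ge> 0" for r
    unfolding \<rho>_def using rin_nn that by simp
  have phi_nn: "\<phi> r \<ge> 0" if "r \<ge> 0" for r
  proof (cases "r \<le> r0")
    case True then show ?thesis unfolding \<phi>_def using pin_ge[of r] that by simp
  next
    case False then show ?thesis unfolding \<phi>_def pout_def using Kpos[of r] Bp r0p
      by (simp add: less_imp_le)
  qed
  have phi_bd: "bounded (\<phi> ` {0..})"
  proof -
    define u0 where "u0 = lK * r0^2"
    have u0p: "u0 > 0" unfolding u0_def using lKp r0p by simp
    define M where "M = max (A + \<kappa> / w2) (B * (1 / (u0 * G1 1 u0)))"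
    have "\<bar>\<phi> r\<bar> \<le> M" if "r \<ge> 0" for r
    proof (cases "r \<le> r0")
      case True
      then show ?thesis unfolding \<phi>_def M_def using pin_ge[OF that True] pin_le[OF that True] by simp
    next
      case False
      have "u0 \<le> lK * r^2" unfolding u0_def using False r0p lKp
        by (intro mult_left_mono power_mono) auto
      then have "kk (lK * r^2) \<le> 1 / (u0 * G1 1 u0)" by (rule kk_bound[OF u0p])
      then have "B * kk (lK * r^2) \<le> B * (1 / (u0 * G1 1 u0))"
        by (rule mult_left_mono) (use Bp in auto)
      then have "pout r \<le> B * (1 / (u0 * G1 1 u0))" unfolding pout_def K_def .
      moreover have "pout r > 0" unfolding pout_def using Kpos[of r] Bp False r0p by simp
      ultimately show ?thesis unfolding \<phi>_def M_def using False by simp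
    qed
    then show ?thesis unfolding bounded_iff by auto
  qed
  have dp_d: "((\<lambda>s. \<epsilon> / 2 * (\<rho> s)\<^sup>2) has_real_derivative dp r) (at r)" for r
  proof -
    have e: "(\<lambda>s. \<epsilon> / 2 * (\<rho> s)\<^sup>2) = (\<lambda>s. if s \<le> r0 then \<epsilon> / 2 * (rin s)^2 else 0)"
      unfolding \<rho>_def by auto
    have dd: "((\<lambda>s. \<epsilon> / 2 * (rin s)^2) has_real_derivative chi * rin s * pin1 s) (at s)" for s
    proof -
      have "((\<lambda>s. \<epsilon> / 2 * (rin s)^2) has_real_derivative
          \<epsilon> / 2 * (of_nat 2 * (chi / \<epsilon> * pin1 s * rin s ^ (2 - Suc 0)))) (at s)"
        by (intro DERIV_cmult DERIV_power rind)
      moreover have "\<epsilon> / 2 * (of_nat 2 * (chi / \<epsilon> * pin1 s * rin s ^ (2 - Suc 0))) = chi * rin s * pin1 s"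
        using ep by simp
      ultimately show ?thesis by simp
    qed
    have "((\<lambda>s. if s \<le> r0 then \<epsilon> / 2 * (rin s)^2 else 0) has_real_derivative
           (if r \<le> r0 then chi * rin r * pin1 r else 0)) (at r)"
      by (rule piece_at) (use dd rin_r0 in auto)
    moreover have "(if r \<le> r0 then chi * rin r * pin1 r else 0) = dp r"
      unfolding dp_def \<rho>_def \<phi>'_def by simp
    ultimately show ?thesis unfolding e by simp
  qed
  have ode: "D * \<phi>'' r + D * \<phi>' r / r + a * \<rho> r - b * \<phi> r = 0" if "r > 0" for r
  proof (cases "r \<le> r0")
    case True
    have "D * \<phi>'' r + D * \<phi>' r / r + a * \<rho> r - b * \<phi> r
        = D * (pin2 r + pin1 r / r) + (a * chi / \<epsilon>) * (pin r - 1) - D * \<beta>^2 * pin r"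
      unfolding \<phi>''_def \<phi>'_def \<rho>_def \<phi>_def rin_def assms(6) using True ep by (simp add: field_simps)
    also have "\<dots> = D * (\<kappa> - w2 * pin r) + D * \<kappa> * (pin r - 1) - D * \<beta>^2 * pin r"
      using pin_ode[of r] kap that by simp
    also have "\<dots> = 0" unfolding w2_def by (simp add: algebra_simps)
    finally show ?thesis .
  next
    case False
    have "D * \<phi>'' r + D * \<phi>' r / r + a * \<rho> r - b * \<phi> r
        = D * (pout2 r + pout1 r / r) - D * \<beta>^2 * pout r"
      unfolding \<phi>''_def \<phi>'_def \<rho>_def \<phi>_def assms(6) using False by (simp add: algebra_simps)
    also have "\<dots> = 0" unfolding pout_ode by simp
    finally show ?thesis .
  qed
  have rho0: "\<rho> 0 > 0" unfolding \<rho>_def using rin_pos[of 0] r0p by simp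
  have phi0: "\<phi> 0 > 0" unfolding \<phi>_def using pin_ge[of 0] r0p by simp
  have rho_pos: "\<forall>r. 0 \<le> r \<and> r < r0 \<longrightarrow> \<rho> r > 0" unfolding \<rho>_def using rin_pos by simp
  have rho_zero: "\<forall>r\<ge>r0. \<rho> r = 0" unfolding \<rho>_def using rin_r0 by simp
  show ?thesis
    apply (rule exI[of _ "\<rho> 0"], rule exI[of _ "\<phi> 0"], rule exI[of _ r0], rule exI[of _ \<rho>],
        rule exI[of _ \<phi>], rule exI[of _ \<phi>'], rule exI[of _ \<phi>''], rule exI[of _ dp])
    using rho0 phi0 r0p rho_cont phi_d phi1_d phi2_cont rho_nn phi_nn phi_bd dp_d ode rho_pos rho_zero
    by (auto simp: dp_def intro: has_field_derivative_at_within)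
qed

end
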